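(* Let $p$ be a NetKAT program in which every occurrence of $\mathsf{dup}$ carries a distinct positive label, and let $A(p)=(S,s_0,\epsilon,\delta)$ be its program automaton. For all packets $pk_{in},pk_1,\dots,pk_n,pk_{out}$ ($n\ge 0$), with $h=pk_{out}::pk_n::\cdots::\langle pk_1\rangle$ (so $h=\langle pk_{out}\rangle$ when $n=0$), we have $h\in[\![p]\!]\langle pk_{in}\rangle$ if and only if $\mathrm{accept}\ s_0\ (pk_{in}\cdot pk_1\cdot\mathsf{dup}\cdots pk_n\cdot\mathsf{dup}\cdot pk_{out})$.
   Context: NetKAT. Fix finitely many fields $f$ with natural-number values. A packet $pk$ assigns a value $pk.f$ to each field; $pk[f:=n]$ is the update. A history is a nonempty list of packets, written $pk::h$ or $\langle pk\rangle$. Predicates: $a ::= 1 \mid 0 \mid f=n \mid a+b \mid a\cdot b \mid \neg a$. Programs: $p ::= a \mid f\leftarrow n \mid p+q \mid p\cdot q \mid p^* \mid \mathsf{dup}^\ell$ with labels $\ell$. Semantics: $[\![1]\!]h=\{h\}$; $[\![0]\!]h=\emptyset$; $[\![f=n]\!](pk::h)=\{pk::h\}$ if $pk.f=n$, else $\emptyset$; $[\![\neg a]\!]h=\{h\}\setminus[\![a]\!]h$; $[\![f\leftarrow n]\!](pk::h)=\{pk[f:=n]::h\}$; $[\![p+q]\!]h=[\![p]\!]h\cup[\![q]\!]h$; $[\![p\cdot q]\!]h=\bigcup_{h'\in[\![p]\!]h}[\![q]\!]h'$; $[\![p^*]\!]h=\bigcup_iF^ih$ with $F^0h=\{h\}$,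 $F^{i+1}h=\bigcup_{h'\in[\![p]\!]h}F^ih'$; $[\![\mathsf{dup}^\ell]\!](pk::h)=\{pk::pk::h\}$. $\mathcal{E}$ and $\mathcal{D}$: $\mathcal{E}(a)=a$, $\mathcal{D}(a)=\emptyset$; $\mathcal{E}(f\leftarrow n)=f\leftarrow n$, $\mathcal{D}(f\leftarrow n)=\emptyset$; $\mathcal{E}(\mathsf{dup}^\ell)=0$, $\mathcal{D}(\mathsf{dup}^\ell)=\{(1,\ell,1)\}$; $\mathcal{E}(q+r)=\mathcal{E}(q)+\mathcal{E}(r)$, $\mathcal{D}(q+r)=\mathcal{D}(q)\cup\mathcal{D}(r)$; $\mathcal{E}(q\cdot r)=\mathcal{E}(q)\cdot\mathcal{E}(r)$, $\mathcal{D}(q\cdot r)=\{(d,\ell,k\cdot r)\mid(d,\ell,k)\in\mathcal{D}(q)\}\cup\{(\mathcal{E}(q)\cdot d,\ell,k)\mid(d,\ell,k)\in\mathcal{D}(r)\}$; $\mathcal{E}(q^* )=\mathcal{E}(q)^*$, $\mathcal{D}(q^* )=\{(\mathcal{E}(q)^*\cdot d,\ell,k\cdot q^* )\mid(d,\ell,k)\in\mathcal{D}(q)\}$. For each label $\ell$ occurring in $p$ there is exactly one triple $(d,\ell,k)\in\mathcal{D}(p)$; write $k_\ell$ for its $k$ (the continuation of $\mathsf{dup}^\ell$), and set $k_0=p$. NetKAT automaton: a tuple $(S,s_0,\epsilon,\delta)$ with $S$ finite, $s_0\in S$, $\epsilon:S\to\mathrm{Pk}\to\mathcal{P}(\mathrm{Pk})$,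 $\delta:S\to\mathrm{Pk}\to\mathcal{P}(\mathrm{Pk}\times S)$. Its inputs are strings $pk_{in}\cdot pk_1\cdot\mathsf{dup}\cdots pk_n\cdot\mathsf{dup}\cdot pk_{out}$; acceptance: $\mathrm{accept}\ s\ (pk_{in}\cdot pk_{out})\iff pk_{out}\in\epsilon\,s\,pk_{in}$, and $\mathrm{accept}\ s\ (pk_{in}\cdot pk_1\cdot\mathsf{dup}\cdot w)\iff$ there is $(pk_1,s')\in\delta\,s\,pk_{in}$ with $\mathrm{accept}\ s'\ (pk_1\cdot w)$. Program automaton $A(p)$: $S$ is the set of labels occurring in $p$ together with $0$; $s_0=0$; $\epsilon\,\ell\,pk=\{pk'\mid\langle pk'\rangle\in[\![\mathcal{E}(k_\ell)]\!]\langle pk\rangle\}$; $\delta\,\ell\,pk=\{(pk',\ell')\mid(d,\ell',k)\in\mathcal{D}(k_\ell),\ \langle pk'\rangle\in[\![d]\!]\langle pk\rangle\}$. *)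

theory Defs
  imports Main
begin

text \<open>Packets assign a natural number to each of finitely many fields (type 'f).
  Histories are nonempty lists of packets, head = current packet.\<close>

type_synonym 'f pk = "'f \<Rightarrow> nat"
type_synonym 'f hist = "'f pk list"

datatype 'f pred = PTrue | PFalse | PEq 'f nat | POr "'f pred" "'f pred"
  | PAnd "'f pred" "'f pred" | PNot "'f pred"

datatype 'f prog = Test "'f pred" | Assign 'f nat | Plus "'f prog" "'f prog"
  | Seq "'f prog" "'f prog" | Star "'f prog" | Dup nat

fun psem :: "'f pred \<Rightarrow> 'f hist \<Rightarrow> 'f hist set" where
  "psem PTrue h = {h}"
| "psem PFalse h = {}"
| "psem (PEq f n) [] = {}"
| "psem (PEq f n) (pk # h) = (if pk f = n then {pk # h} else {})"
| "psem (POr a b) h = psem a h \<union> psem b h"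
| "psem (PAnd a b) h = (\<Union>h'\<in>psem a h. psem b h')"
| "psem (PNot a) h = {h} - psem a h"

primrec starF :: "('f hist \<Rightarrow> 'f hist set) \<Rightarrow> nat \<Rightarrow> 'f hist \<Rightarrow> 'f hist set" where
  "starF P 0 h = {h}"
| "starF P (Suc i) h = (\<Union>h'\<in>P h. starF P i h')"

primrec sem :: "'f prog \<Rightarrow> 'f hist \<Rightarrow> 'f hist set" where
  "sem (Test a) = psem a"
| "sem (Assign f n) = (\<lambda>h. case h of [] \<Rightarrow> {} | pk # t \<Rightarrow> {(pk(f := n)) # t})"
| "sem (Plus p q) = (\<lambda>h. sem p h \<union> sem q h)"
| "sem (Seq p q) = (\<lambda>h. \<Union>h'\<in>sem p h. sem q h')"
| "sem (Star p) = (\<lambda>h. \<Union>i. starF (sem p) i h)"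
| "sem (Dup l) = (\<lambda>h. case h of [] \<Rightarrow> {} | pk # t \<Rightarrow> {pk # pk # t})"

primrec labels :: "'f prog \<Rightarrow> nat list" where
  "labels (Test a) = []"
| "labels (Assign f n) = []"
| "labels (Plus p q) = labels p @ labels q"
| "labels (Seq p q) = labels p @ labels q"
| "labels (Star p) = labels p"
| "labels (Dup l) = [l]"

primrec E :: "'f prog \<Rightarrow> 'f prog" where
  "E (Test a) = Test a"
| "E (Assign f n) = Assign f n"
| "E (Plus q r) = Plus (E q) (E r)"
| "E (Seq q r) = Seq (E q) (E r)"
| "E (Star q) = Star (E q)"
| "E (Dup l) = Test PFalse"

primrec D :: "'f prog \<Rightarrow> ('f prog \<times> nat \<times> 'f prog) set" where
  "D (Test a) = {}"
| "D (Assign f n) = {}"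
| "D (Plus q r) = D q \<union> D r"
| "D (Seq q r) = {(d, l, Seq k r) | d l k. (d, l, k) \<in> D q}
                \<union> {(Seq (E q) d, l, k) | d l k. (d, l, k) \<in> D r}"
| "D (Star q) = {(Seq (Star (E q)) d, l, Seq k (Star q)) | d l k. (d, l, k) \<in> D q}"
| "D (Dup l) = {(Test PTrue, l, Test PTrue)}"

definition cont :: "'f prog \<Rightarrow> nat \<Rightarrow> 'f prog" where
  "cont p l = (if l = 0 then p else (THE k. \<exists>d. (d, l, k) \<in> D p))"

type_synonym ('s, 'f) nk_automaton =
  "'s set \<times> 's \<times> ('s \<Rightarrow> 'f pk \<Rightarrow> 'f pk set) \<times> ('s \<Rightarrow> 'f pk \<Rightarrow> ('f pk \<times> 's) set)"

text \<open>accept A s pk_in [pk_1,...,pk_n] pk_out models acceptance of the string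
  pk_in . pk_1 . dup ... pk_n . dup . pk_out from state s.\<close>
fun accept :: "('s, 'f) nk_automaton \<Rightarrow> 's \<Rightarrow> 'f pk \<Rightarrow> 'f pk list \<Rightarrow> 'f pk \<Rightarrow> bool" where
  "accept (S, s0, eps, delta) s pkin [] pkout = (pkout \<in> eps s pkin)"
| "accept (S, s0, eps, delta) s pkin (pk1 # w) pkout =
     (\<exists>s'. (pk1, s') \<in> delta s pkin \<and> accept (S, s0, eps, delta) s' pk1 w pkout)"

definition prog_automaton :: "'f prog \<Rightarrow> (nat, 'f) nk_automaton" where
  "prog_automaton p =
    (insert 0 (set (labels p)), 0,
     (\<lambda>l pk. {pk'. [pk'] \<in> sem (E (cont p l)) [pk]}),
     (\<lambda>l pk. {(pk', l'). \<exists>d k. (d, l', k) \<in> D (cont p l) \<and> [pk'] \<in> sem d [pk]}))"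

end

theory Submission
  imports Defs
begin


lemma psem_sub: "psem a h \<subseteq> {h}"
  by (induction a h rule: psem.induct) auto

lemma psem_app: "h0 \<noteq> [] \<Longrightarrow> psem a (h0 @ t) = (\<lambda>h. h @ t) ` psem a h0"
proof (induction a arbitrary: h0 t)
  case (PEq f n) then show ?case by (cases h0) auto
next
  case (PAnd a b)
  have "psem (PAnd a b) (h0 @ t) = (\<Union>h'\<in>psem a (h0@t). psem b h')" by simp
  also have "\<dots> = (\<Union>h'\<in>psem a h0. psem b (h'@t))" by (simp add: PAnd.IH(1)[OF PAnd.prems] image_image)
  also have "\<dots> = (\<Union>h'\<in>psem a h0. (\<lambda>h. h @ t) ` psem b h')"
  proof (rule SUP_cong[OF refl])
    fix h' assume "h' \<in> psem a h0"
    then have "h' = h0" using psem_sub[of a h0] by auto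
    then show "psem b (h'@t) = (\<lambda>h. h @ t) ` psem b h'" using PAnd.IH(2) PAnd.prems by simp
  qed
  finally show ?case by (simp add: image_UN)
next
  case (PNot a)
  have "inj (\<lambda>h::'a hist. h @ t)" by (simp add: inj_def)
  then show ?case by (simp add: PNot.IH[OF PNot.prems] image_set_diff)
qed auto

lemma starF_len:
  assumes "\<And>h0 h. h \<in> P h0 \<Longrightarrow> length h0 \<le> length h"
  shows "h \<in> starF P i h0 \<Longrightarrow> length h0 \<le> length h"
proof (induction i arbitrary: h0)
  case 0 then show ?case by simp
next
  case (Suc i)
  from Suc.prems obtain h' where "h' \<in> P h0" "h \<in> starF P i h'" by auto
  then show ?case using Suc.IH assms[of h' h0] by fastforce
qed

lemma sem_len: "h \<in> sem x h0 \<Longrightarrow> length h0 \<le> length h"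
proof (induction x arbitrary: h0 h)
  case (Test a) then show ?case using psem_sub[of a h0] by auto
next
  case (Assign f n) then show ?case by (auto split: list.splits)
next
  case (Seq p q)
  from Seq.prems obtain h' where "h' \<in> sem p h0" "h \<in> sem q h'" by auto
  then show ?case using Seq.IH(1)[of h' h0] Seq.IH(2)[of h h'] by fastforce
next
  case (Star p) then show ?case using starF_len[of "sem p", OF Star.IH] by auto
next
  case (Dup l) then show ?case by (auto split: list.splits)
qed auto

lemma starF_lenE:
  assumes "\<And>h0 h. h \<in> P h0 \<Longrightarrow> length h = length h0"
  shows "h \<in> starF P i h0 \<Longrightarrow> length h = length h0"
proof (induction i arbitrary: h0)
  case 0 then show ?case by simp
next
  case (Suc i)
  from Suc.prems obtain h' where "h' \<in> P h0" "h \<in> starF P i h'" by auto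
  then show ?case using Suc.IH assms[of h' h0] by fastforce
qed

lemma E_len: "h \<in> sem (E x) h0 \<Longrightarrow> length h = length h0"
proof (induction x arbitrary: h0 h)
  case (Test a) then show ?case using psem_sub[of a h0] by auto
next
  case (Assign f n) then show ?case by (auto split: list.splits)
next
  case (Seq p q)
  from Seq.prems obtain h' where "h' \<in> sem (E p) h0" "h \<in> sem (E q) h'" by auto
  then show ?case using Seq.IH(1)[of h' h0] Seq.IH(2)[of h h'] by fastforce
next
  case (Star p) then show ?case using starF_lenE[of "sem (E p)", OF Star.IH] by auto
qed auto

lemma starF_app:
  assumes "\<And>h0 t. h0 \<noteq> [] \<Longrightarrow> P (h0@t) = (\<lambda>h. h@t) ` P h0"
    and "\<And>h0 h. h \<in> P h0 \<Longrightarrow> length h0 \<le> length h"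
  shows "h0 \<noteq> [] \<Longrightarrow> starF P i (h0@t) = (\<lambda>h. h@t) ` starF P i h0"
proof (induction i arbitrary: h0)
  case 0 then show ?case by simp
next
  case (Suc i)
  have "starF P (Suc i) (h0@t) = (\<Union>h'\<in>P h0. starF P i (h'@t))"
    using assms(1)[OF Suc.prems] by simp
  also have "\<dots> = (\<Union>h'\<in>P h0. (\<lambda>h. h@t) ` starF P i h')"
  proof (rule SUP_cong[OF refl])
    fix h' assume "h' \<in> P h0"
    then have "h' \<noteq> []" using assms(2)[of h' h0] Suc.prems by auto
    then show "starF P i (h'@t) = (\<lambda>h. h @ t) ` starF P i h'" by (rule Suc.IH)
  qed
  finally show ?case by (simp add: image_UN)
qed

lemma sem_app: "h0 \<noteq> [] \<Longrightarrow> sem x (h0 @ t) = (\<lambda>h. h @ t) ` sem x h0"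
proof (induction x arbitrary: h0 t)
  case (Test a) then show ?case using psem_app by simp
next
  case (Assign f n) then show ?case by (cases h0) simp_all
next
  case (Plus p q) then show ?case by (simp add: image_Un)
next
  case (Seq p q)
  have "sem (Seq p q) (h0 @ t) = (\<Union>h'\<in>sem p (h0@t). sem q h')" by simp
  also have "\<dots> = (\<Union>h'\<in>sem p h0. sem q (h'@t))" by (simp add: Seq.IH(1)[OF Seq.prems] image_image)
  also have "\<dots> = (\<Union>h'\<in>sem p h0. (\<lambda>h. h @ t) ` sem q h')"
  proof (rule SUP_cong[OF refl])
    fix h' assume "h' \<in> sem p h0"
    then have "h' \<noteq> []" using sem_len[of h' p h0] Seq.prems by auto
    then show "sem q (h'@t) = (\<lambda>h. h @ t) ` sem q h'" by (rule Seq.IH(2))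
  qed
  finally show ?case by (simp add: image_UN)
next
  case (Star p)
  have "starF (sem p) i (h0@t) = (\<lambda>h. h@t) ` starF (sem p) i h0" for i
    by (rule starF_app[of "sem p", OF Star.IH sem_len Star.prems])
  then show ?case by (simp add: image_UN)
next
  case (Dup l) then show ?case by (cases h0) simp_all
qed

lemma starF_add: "h1 \<in> starF P i h0 \<Longrightarrow> h2 \<in> starF P j h1 \<Longrightarrow> h2 \<in> starF P (i+j) h0"
proof (induction i arbitrary: h0)
  case 0 then show ?case by simp
next
  case (Suc i)
  from Suc.prems(1) obtain h' where "h' \<in> P h0" "h1 \<in> starF P i h'" by auto
  with Suc.IH Suc.prems(2) have "h2 \<in> starF P (i+j) h'" by blast
  with \<open>h' \<in> P h0\<close> show ?case by auto
qed




lemma starF_sem_app: "h0 \<noteq> [] \<Longrightarrow> starF (sem q) i (h0@t) = (\<lambda>h. h@t) ` starF (sem q) i h0"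
  by (rule starF_app[OF sem_app sem_len])

lemma sem_snoc: "h0 \<noteq> [] \<Longrightarrow> x \<in> sem r (h0@[pk]) \<longleftrightarrow> (\<exists>h. x = h@[pk] \<and> h \<in> sem r h0)"
  using sem_app[of h0 r "[pk]"] by blast

lemma starF_snoc: "h0 \<noteq> [] \<Longrightarrow> x \<in> starF (sem r) i (h0@[pk]) \<longleftrightarrow> (\<exists>h. x = h@[pk] \<and> h \<in> starF (sem r) i h0)"
  using starF_sem_app[of h0 r i "[pk]"] by blast

lemma sem_ne: "h \<in> sem x (pk # t) \<Longrightarrow> h \<noteq> []"
  using sem_len[of h x "pk#t"] by auto

lemma E_single: "h \<in> sem (E x) [pk] \<Longrightarrow> \<exists>pk'. h = [pk']"
  using E_len[of h x "[pk]"] by (cases h) auto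

lemma Estar_single: assumes "h \<in> starF (sem (E x)) i [pk]" shows "\<exists>pk'. h = [pk']"
proof -
  have "length h = length [pk]" by (rule starF_lenE[OF E_len assms])
  then show ?thesis by (cases h) auto
qed

lemma starF_SucI: "h1 \<in> P h0 \<Longrightarrow> h \<in> starF P i h1 \<Longrightarrow> h \<in> starF P (Suc i) h0"
  by auto

lemma semStarI: "h \<in> starF (sem q) i h0 \<Longrightarrow> h \<in> sem (Star q) h0"
  by auto

definition FTR :: "'f prog \<Rightarrow> 'f pk \<Rightarrow> 'f hist \<Rightarrow> bool" where
  "FTR x pk h \<longleftrightarrow> (\<exists>pk'. h = [pk'] \<and> [pk'] \<in> sem (E x) [pk]) \<or>
     (\<exists>d l k pk1 h'. (d,l,k) \<in> D x \<and> [pk1] \<in> sem d [pk] \<and> h' \<in> sem k [pk1] \<and> h = h'@[pk1])"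

lemma Dstar_step:
  assumes "(d',l,k') \<in> D (Star q)" "[pk'] \<in> sem (E q) [pk]" "x \<in> sem d' [pk']"
  shows "x \<in> sem d' [pk]"
proof -
  from assms(1) obtain d where d': "d' = Seq (Star (E q)) d" by auto
  from assms(3) d' obtain h2 j where "h2 \<in> starF (sem (E q)) j [pk']" "x \<in> sem d h2" by auto
  then have "h2 \<in> starF (sem (E q)) (Suc j) [pk]" by (intro starF_SucI[where P="sem (E q)", OF assms(2)])
  then have "h2 \<in> sem (Star (E q)) [pk]" by (rule semStarI)
  with \<open>x \<in> sem d h2\<close> d' show ?thesis by auto
qed

lemma star_fwd:
  assumes IH: "\<And>pk h. h \<in> sem q [pk] \<longleftrightarrow> FTR q pk h"
  shows "h \<in> starF (sem q) i [pk] \<Longrightarrow> FTR (Star q) pk h"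
proof (induction i arbitrary: pk h)
  case 0
  then have "h = [pk]" by simp
  moreover have "[pk] \<in> sem (E (Star q)) [pk]"
    by simp (metis starF.simps(1) singletonI)
  ultimately show ?case unfolding FTR_def by blast
next
  case (Suc i)
  from Suc.prems obtain h1 where h1: "h1 \<in> sem q [pk]" "h \<in> starF (sem q) i h1" by auto
  from h1(1) IH have "FTR q pk h1" by blast
  then show ?case unfolding FTR_def[of q]
  proof (elim disjE exE conjE)
    fix pk' assume A: "h1 = [pk']" "[pk'] \<in> sem (E q) [pk]"
    then have "FTR (Star q) pk' h" using Suc.IH h1(2) by blast
    then show ?thesis unfolding FTR_def[of "Star q" pk' h]
    proof (elim disjE exE conjE)
      fix pk'' assume "h = [pk'']" "[pk''] \<in> sem (E (Star q)) [pk']"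
      then obtain j where "[pk''] \<in> starF (sem (E q)) j [pk']" by auto
      then have "[pk''] \<in> starF (sem (E q)) (Suc j) [pk]" by (intro starF_SucI[where P="sem (E q)", OF A(2)])
      then have "[pk''] \<in> sem (E (Star q)) [pk]" unfolding E.simps by (rule semStarI)
      then show ?thesis using \<open>h = [pk'']\<close> unfolding FTR_def by blast
    next
      fix d l k pk1 h' assume "(d,l,k) \<in> D (Star q)" "[pk1] \<in> sem d [pk']" "h' \<in> sem k [pk1]" "h = h'@[pk1]"
      then show ?thesis using Dstar_step[OF _ A(2)] unfolding FTR_def by blast
    qed
  next
    fix d l k pk1 h'' assume B: "(d,l,k) \<in> D q" "[pk1] \<in> sem d [pk]" "h'' \<in> sem k [pk1]" "h1 = h''@[pk1]"
    have "h'' \<noteq> []" using B(3) sem_ne by blast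
    with h1(2) B(4) obtain h3 where h3: "h = h3@[pk1]" "h3 \<in> starF (sem q) i h''"
      using starF_snoc by blast
    have "(Seq (Star (E q)) d, l, Seq k (Star q)) \<in> D (Star q)" using B(1) by auto
    moreover have "[pk1] \<in> sem (Seq (Star (E q)) d) [pk]"
    proof -
      have "[pk] \<in> starF (sem (E q)) 0 [pk]" by simp
      then have "[pk] \<in> sem (Star (E q)) [pk]" by (rule semStarI)
      then show ?thesis using B(2) by (simp only: sem.simps) blast
    qed
    moreover have "h3 \<in> sem (Seq k (Star q)) [pk1]" using B(3) h3(2) by auto
    ultimately show ?thesis using h3(1) unfolding FTR_def by blast
  qed
qed

lemma E_star:
  assumes IH: "\<And>pk h. h \<in> sem q [pk] \<longleftrightarrow> FTR q pk h"
  shows "[pk'] \<in> starF (sem (E q)) i [pk] \<Longrightarrow> [pk'] \<in> starF (sem q) i [pk]"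
proof (induction i arbitrary: pk)
  case 0 then show ?case by simp
next
  case (Suc i)
  from Suc.prems obtain h1 where h1: "h1 \<in> sem (E q) [pk]" "[pk'] \<in> starF (sem (E q)) i h1" by auto
  from h1(1) obtain pk2 where "h1 = [pk2]" using E_single by blast
  with h1 have "[pk2] \<in> sem q [pk]" using IH unfolding FTR_def by blast
  moreover have "[pk'] \<in> starF (sem q) i [pk2]" using Suc.IH h1(2) \<open>h1 = [pk2]\<close> by blast
  ultimately show ?case by auto
qed

lemma star_bwd:
  assumes IH: "\<And>pk h. h \<in> sem q [pk] \<longleftrightarrow> FTR q pk h"
  shows "FTR (Star q) pk h \<Longrightarrow> h \<in> sem (Star q) [pk]"
  unfolding FTR_def
proof (elim disjE exE conjE)
  fix pk' assume "h = [pk']" "[pk'] \<in> sem (E (Star q)) [pk]"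
  then obtain i where "[pk'] \<in> starF (sem (E q)) i [pk]" by auto
  then have "[pk'] \<in> starF (sem q) i [pk]" using E_star[OF IH] by blast
  then show ?thesis using \<open>h = [pk']\<close> by auto
next
  fix d' l k' pk1 h' assume A: "(d',l,k') \<in> D (Star q)" "[pk1] \<in> sem d' [pk]" "h' \<in> sem k' [pk1]" "h = h'@[pk1]"
  from A(1) obtain d k where dk: "d' = Seq (Star (E q)) d" "k' = Seq k (Star q)" "(d,l,k) \<in> D q" by auto
  from A(2) dk obtain h2 i where h2: "h2 \<in> starF (sem (E q)) i [pk]" "[pk1] \<in> sem d h2" by auto
  from h2(1) obtain pk2 where pk2: "h2 = [pk2]" using Estar_single by blast
  have s1: "[pk2] \<in> starF (sem q) i [pk]" using E_star[OF IH] h2(1) pk2 by blast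
  from A(3) dk obtain h4 j where h4: "h4 \<in> sem k [pk1]" "h' \<in> starF (sem q) j h4" by auto
  have "h4 \<noteq> []" using h4(1) sem_ne by blast
  have "h4@[pk1] \<in> sem q [pk2]" using IH unfolding FTR_def using dk(3) h2(2) pk2 h4(1) by blast
  moreover have "h'@[pk1] \<in> starF (sem q) j (h4@[pk1])" using starF_snoc[OF \<open>h4 \<noteq> []\<close>] h4(2) by blast
  ultimately have "h'@[pk1] \<in> starF (sem q) (Suc j) [pk2]" by auto
  then have "h'@[pk1] \<in> starF (sem q) (i + Suc j) [pk]" using starF_add[OF s1] by blast
  then have "h'@[pk1] \<in> sem (Star q) [pk]" by (rule semStarI)
  then show ?thesis using A(4) by simp
qed




lemma FTR_Plus: "FTR (Plus q r) pk h \<longleftrightarrow> FTR q pk h \<or> FTR r pk h"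
  unfolding FTR_def by (simp only: E.simps D.simps sem.simps Un_iff) blast

lemma FT: "h \<in> sem x [pk] \<longleftrightarrow> FTR x pk h"
proof (induction x arbitrary: pk h)
  case (Test a)
  show ?case using psem_sub[of a "[pk]"] unfolding FTR_def by auto
next
  case (Assign f n)
  show ?case unfolding FTR_def by auto
next
  case (Dup l)
  show ?case unfolding FTR_def by auto
next
  case (Plus q r)
  show ?case using Plus.IH[of h pk] by (simp add: FTR_Plus)
next
  case (Star q)
  show ?case
  proof
    assume "h \<in> sem (Star q) [pk]"
    then obtain i where "h \<in> starF (sem q) i [pk]" by auto
    then show "FTR (Star q) pk h" by (rule star_fwd[OF Star.IH])
  next
    assume "FTR (Star q) pk h"
    then show "h \<in> sem (Star q) [pk]" by (rule star_bwd[OF Star.IH])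
  qed
next
  case (Seq q r)
  show ?case
  proof
    assume "h \<in> sem (Seq q r) [pk]"
    then obtain h1 where h1: "h1 \<in> sem q [pk]" "h \<in> sem r h1" by auto
    from h1(1) Seq.IH(1) have "FTR q pk h1" by blast
    then show "FTR (Seq q r) pk h" unfolding FTR_def[of q]
    proof (elim disjE exE conjE)
      fix pk' assume A: "h1 = [pk']" "[pk'] \<in> sem (E q) [pk]"
      then have "FTR r pk' h" using Seq.IH(2) h1(2) by blast
      then show ?thesis unfolding FTR_def[of r]
      proof (elim disjE exE conjE)
        fix pk'' assume "h = [pk'']" "[pk''] \<in> sem (E r) [pk']"
        then have "[pk''] \<in> sem (E (Seq q r)) [pk]" using A(2) by auto
        then show ?thesis using \<open>h = [pk'']\<close> unfolding FTR_def by blast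
      next
        fix d l k pk1 h' assume B: "(d,l,k) \<in> D r" "[pk1] \<in> sem d [pk']" "h' \<in> sem k [pk1]" "h = h'@[pk1]"
        have "(Seq (E q) d, l, k) \<in> D (Seq q r)" using B(1) by auto
        moreover have "[pk1] \<in> sem (Seq (E q) d) [pk]" using A(2) B(2) by auto
        ultimately show ?thesis using B(3,4) unfolding FTR_def by blast
      qed
    next
      fix d l k pk1 h'' assume B: "(d,l,k) \<in> D q" "[pk1] \<in> sem d [pk]" "h'' \<in> sem k [pk1]" "h1 = h''@[pk1]"
      have "h'' \<noteq> []" using B(3) sem_ne by blast
      with h1(2) B(4) obtain h3 where h3: "h = h3@[pk1]" "h3 \<in> sem r h''"
        using sem_snoc by blast
      have "(d, l, Seq k r) \<in> D (Seq q r)" using B(1) by auto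
      moreover have "h3 \<in> sem (Seq k r) [pk1]" using B(3) h3(2) by auto
      ultimately show ?thesis using h3(1) B(2) unfolding FTR_def by blast
    qed
  next
    assume "FTR (Seq q r) pk h"
    then show "h \<in> sem (Seq q r) [pk]" unfolding FTR_def
    proof (elim disjE exE conjE)
      fix pk' assume A: "h = [pk']" "[pk'] \<in> sem (E (Seq q r)) [pk]"
      then obtain h2 where h2: "h2 \<in> sem (E q) [pk]" "[pk'] \<in> sem (E r) h2" by auto
      from h2(1) obtain pk2 where "h2 = [pk2]" using E_single by blast
      then have "[pk2] \<in> sem q [pk]" using Seq.IH(1) h2(1) unfolding FTR_def by blast
      moreover have "[pk'] \<in> sem r [pk2]" using Seq.IH(2) h2(2) \<open>h2 = [pk2]\<close> unfolding FTR_def by blast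
      ultimately show ?thesis using A(1) by auto
    next
      fix d' l k' pk1 h' assume A: "(d',l,k') \<in> D (Seq q r)" "[pk1] \<in> sem d' [pk]" "h' \<in> sem k' [pk1]" "h = h'@[pk1]"
      from A(1) have "(\<exists>k. (d',l,k) \<in> D q \<and> k' = Seq k r) \<or> (\<exists>d. (d,l,k') \<in> D r \<and> d' = Seq (E q) d)"
        by auto
      then show ?thesis
      proof (elim disjE exE conjE)
        fix k assume C: "(d',l,k) \<in> D q" "k' = Seq k r"
        from A(3) C(2) obtain h4 where h4: "h4 \<in> sem k [pk1]" "h' \<in> sem r h4" by auto
        have "h4 \<noteq> []" using h4(1) sem_ne by blast
        have "h4@[pk1] \<in> sem q [pk]" using Seq.IH(1) C(1) A(2) h4(1) unfolding FTR_def by blast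
        moreover have "h'@[pk1] \<in> sem r (h4@[pk1])" using sem_snoc[OF \<open>h4 \<noteq> []\<close>] h4(2) by blast
        ultimately show ?thesis using A(4) by auto
      next
        fix d assume C: "(d,l,k') \<in> D r" "d' = Seq (E q) d"
        from A(2) C(2) obtain h2 where h2: "h2 \<in> sem (E q) [pk]" "[pk1] \<in> sem d h2" by auto
        from h2(1) obtain pk2 where "h2 = [pk2]" using E_single by blast
        then have "[pk2] \<in> sem q [pk]" using Seq.IH(1) h2(1) unfolding FTR_def by blast
        moreover have "h \<in> sem r [pk2]" using Seq.IH(2) C(1) h2(2) \<open>h2 = [pk2]\<close> A(3,4) unfolding FTR_def by blast
        ultimately show ?thesis by auto
      qed
    qed
  qed
qed




lemma D_labels: "(d,l,k) \<in> D x \<Longrightarrow> l \<in> set (labels x)"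
  by (induction x arbitrary: d l k) auto

lemma D_exists: "l \<in> set (labels x) \<Longrightarrow> \<exists>d k. (d,l,k) \<in> D x"
proof (induction x)
  case (Plus q r) then show ?case by auto
next
  case (Seq q r)
  show ?case
  proof (cases "l \<in> set (labels q)")
    case True
    then obtain d k where "(d,l,k) \<in> D q" using Seq.IH(1) by blast
    then have "(d,l,Seq k r) \<in> D (Seq q r)" by simp
    then show ?thesis by blast
  next
    case False
    then have "l \<in> set (labels r)" using Seq.prems by simp
    then obtain d k where "(d,l,k) \<in> D r" using Seq.IH(2) by blast
    then have "(Seq (E q) d,l,k) \<in> D (Seq q r)" by simp
    then show ?thesis by blast
  qed
next
  case (Star q)
  then obtain d k where "(d,l,k) \<in> D q" by auto
  then have "(Seq (Star (E q)) d,l,Seq k (Star q)) \<in> D (Star q)" by simp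
  then show ?case by blast
qed auto

lemma D_Seq_iff: "(a,l,b) \<in> D (Seq q r) \<longleftrightarrow> (\<exists>k. (a,l,k)\<in>D q \<and> b = Seq k r) \<or> (\<exists>d. (d,l,b)\<in>D r \<and> a = Seq (E q) d)"
  by auto

lemma D_Star_iff: "(a,l,b) \<in> D (Star q) \<longleftrightarrow> (\<exists>d k. (d,l,k)\<in>D q \<and> a = Seq (Star (E q)) d \<and> b = Seq k (Star q))"
  by auto

lemma D_unique: "distinct (labels x) \<Longrightarrow> (d1,l,k1) \<in> D x \<Longrightarrow> (d2,l,k2) \<in> D x \<Longrightarrow> k1 = k2"
proof (induction x arbitrary: d1 k1 d2 k2)
  case (Plus q r)
  have dq: "distinct (labels q)" "distinct (labels r)" "set (labels q) \<inter> set (labels r) = {}"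
    using Plus.prems(1) by auto
  from Plus.prems(2) have "(d1,l,k1) \<in> D q \<or> (d1,l,k1) \<in> D r" by simp
  moreover from Plus.prems(3) have "(d2,l,k2) \<in> D q \<or> (d2,l,k2) \<in> D r" by simp
  ultimately show ?case using Plus.IH(1)[OF dq(1)] Plus.IH(2)[OF dq(2)]
      D_labels[of d1 l k1] D_labels[of d2 l k2] dq(3) by blast
next
  case (Seq q r)
  have dq: "distinct (labels q)" "distinct (labels r)" "set (labels q) \<inter> set (labels r) = {}"
    using Seq.prems(1) by auto
  from Seq.prems(2) have A: "(\<exists>k. (d1,l,k)\<in>D q \<and> k1 = Seq k r) \<or> (\<exists>d. (d,l,k1)\<in>D r \<and> d1 = Seq (E q) d)"
    by (simp only: D_Seq_iff)
  from Seq.prems(3) have B: "(\<exists>k. (d2,l,k)\<in>D q \<and> k2 = Seq k r) \<or> (\<exists>d. (d,l,k2)\<in>D r \<and> d2 = Seq (E q) d)"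
    by (simp only: D_Seq_iff)
  from A B show ?case
  proof (elim disjE exE conjE)
    fix ka kb assume "(d1,l,ka)\<in>D q" "k1 = Seq ka r" "(d2,l,kb)\<in>D q" "k2 = Seq kb r"
    then show ?thesis using Seq.IH(1)[OF dq(1)] by blast
  next
    fix ka db assume "(d1,l,ka)\<in>D q" "(db,l,k2)\<in>D r"
    then show ?thesis using D_labels dq(3) by blast
  next
    fix da kb assume "(da,l,k1)\<in>D r" "(d2,l,kb)\<in>D q"
    then show ?thesis using D_labels dq(3) by blast
  next
    fix da db assume "(da,l,k1)\<in>D r" "(db,l,k2)\<in>D r"
    then show ?thesis using Seq.IH(2)[OF dq(2)] by blast
  qed
next
  case (Star q)
  from Star.prems(2) obtain da ka where "(da,l,ka)\<in>D q" "k1 = Seq ka (Star q)"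
    by (auto simp only: D_Star_iff)
  moreover from Star.prems(3) obtain db kb where "(db,l,kb)\<in>D q" "k2 = Seq kb (Star q)"
    by (auto simp only: D_Star_iff)
  ultimately show ?case using Star.IH Star.prems(1) by (metis labels.simps(5))
qed auto

lemma D_closed: "(d,l,k) \<in> D x \<Longrightarrow> (d',l',k') \<in> D k \<Longrightarrow> \<exists>d''. (d'',l',k') \<in> D x"
proof (induction x arbitrary: d l k d' l' k')
  case (Plus q r)
  from Plus.prems(1) have "(d,l,k) \<in> D q \<or> (d,l,k) \<in> D r" by simp
  then show ?case
  proof
    assume "(d,l,k) \<in> D q"
    then obtain d'' where "(d'',l',k') \<in> D q" using Plus.IH(1) Plus.prems(2) by blast
    then show ?thesis by auto
  next
    assume "(d,l,k) \<in> D r"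
    then obtain d'' where "(d'',l',k') \<in> D r" using Plus.IH(2) Plus.prems(2) by blast
    then show ?thesis by auto
  qed
next
  case (Seq q r)
  from Seq.prems(1) have "(\<exists>k0. (d,l,k0)\<in>D q \<and> k = Seq k0 r) \<or> (\<exists>d0. (d0,l,k)\<in>D r \<and> d = Seq (E q) d0)"
    by (simp only: D_Seq_iff)
  then show ?case
  proof (elim disjE exE conjE)
    fix k0 assume k0: "(d,l,k0)\<in>D q" "k = Seq k0 r"
    from Seq.prems(2) k0(2) have "(\<exists>k1. (d',l',k1)\<in>D k0 \<and> k' = Seq k1 r) \<or> (\<exists>d1. (d1,l',k')\<in>D r \<and> d' = Seq (E k0) d1)"
      by (simp only: D_Seq_iff)
    then show ?thesis
    proof (elim disjE exE conjE)
      fix k1 assume "(d',l',k1)\<in>D k0" "k' = Seq k1 r"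
      then obtain d'' where "(d'',l',k1) \<in> D q" using Seq.IH(1) k0(1) by blast
      then have "(d'',l',k') \<in> D (Seq q r)" using \<open>k' = Seq k1 r\<close> by (simp only: D_Seq_iff) blast
      then show ?thesis by blast
    next
      fix d1 assume "(d1,l',k')\<in>D r"
      then have "(Seq (E q) d1,l',k') \<in> D (Seq q r)" by (simp only: D_Seq_iff) blast
      then show ?thesis by blast
    qed
  next
    fix d0 assume "(d0,l,k)\<in>D r"
    then obtain d'' where "(d'',l',k') \<in> D r" using Seq.IH(2) Seq.prems(2) by blast
    then have "(Seq (E q) d'',l',k') \<in> D (Seq q r)" by (simp only: D_Seq_iff) blast
    then show ?thesis by blast
  qed
next
  case (Star q)
  from Star.prems(1) obtain d0 k0 where k0: "(d0,l,k0)\<in>D q" "k = Seq k0 (Star q)"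
    by (auto simp only: D_Star_iff)
  from Star.prems(2) k0(2) have "(\<exists>k1. (d',l',k1)\<in>D k0 \<and> k' = Seq k1 (Star q)) \<or> (\<exists>d1. (d1,l',k')\<in>D (Star q) \<and> d' = Seq (E k0) d1)"
    by (simp only: D_Seq_iff)
  then show ?case
  proof (elim disjE exE conjE)
    fix k1 assume "(d',l',k1)\<in>D k0" "k' = Seq k1 (Star q)"
    then obtain d'' where "(d'',l',k1) \<in> D q" using Star.IH k0(1) by blast
    then have "(Seq (Star (E q)) d'',l',k') \<in> D (Star q)" using \<open>k' = Seq k1 (Star q)\<close> by (simp only: D_Star_iff) blast
    then show ?thesis by blast
  next
    fix d1 assume "(d1,l',k')\<in>D (Star q)"
    then show ?thesis by blast
  qed
qed auto

lemma cont_eq: "distinct (labels p) \<Longrightarrow> (d,l,k) \<in> D p \<Longrightarrow> l \<noteq> 0 \<Longrightarrow> cont p l = k"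
  unfolding cont_def using D_unique by (simp, blast)

lemma closure:
  assumes dist: "distinct (labels p)" and pos: "\<forall>l\<in>set (labels p). 0 < l"
    and st: "l = 0 \<or> l \<in> set (labels p)" and tr: "(d',l',k') \<in> D (cont p l)"
  shows "l' \<in> set (labels p) \<and> k' = cont p l'"
proof -
  have "\<exists>d''. (d'',l',k') \<in> D p"
  proof (cases "l = 0")
    case True then show ?thesis using tr unfolding cont_def by auto
  next
    case False
    with st obtain d k where dk: "(d,l,k) \<in> D p" using D_exists by blast
    then have "cont p l = k" using cont_eq[OF dist dk False] by simp
    then show ?thesis using D_closed[OF dk] tr by simp
  qed
  then obtain d'' where d'': "(d'',l',k') \<in> D p" by blast
  then have l': "l' \<in> set (labels p)" by (rule D_labels)
  with pos have "l' \<noteq> 0" by auto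
  with l' cont_eq[OF dist d''] show ?thesis by simp
qed

lemma accN: "accept (prog_automaton p) l pkin [] pkout \<longleftrightarrow> [pkout] \<in> sem (E (cont p l)) [pkin]"
  unfolding prog_automaton_def by simp

lemma accC: "accept (prog_automaton p) l pkin (pk1#w) pkout \<longleftrightarrow>
   (\<exists>l' d k. (d,l',k) \<in> D (cont p l) \<and> [pk1] \<in> sem d [pkin] \<and> accept (prog_automaton p) l' pk1 w pkout)"
  unfolding prog_automaton_def by auto

lemma main:
  assumes dist: "distinct (labels p)" and pos: "\<forall>l\<in>set (labels p). 0 < l"
  shows "l = 0 \<or> l \<in> set (labels p) \<Longrightarrow>
    accept (prog_automaton p) l pkin pks pkout \<longleftrightarrow> pkout # rev pks \<in> sem (cont p l) [pkin]"
proof (induction pks arbitrary: l pkin)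
  case Nil
  have "[pkout] \<in> sem (cont p l) [pkin] \<longleftrightarrow> [pkout] \<in> sem (E (cont p l)) [pkin]"
  proof
    assume "[pkout] \<in> sem (cont p l) [pkin]"
    then have "FTR (cont p l) pkin [pkout]" using FT by blast
    then show "[pkout] \<in> sem (E (cont p l)) [pkin]" unfolding FTR_def
    proof (elim disjE exE conjE)
      fix d l' k pk1 h' assume "h' \<in> sem k [pk1]" "[pkout] = h' @ [pk1]"
      then show ?thesis using sem_ne[of h' k pk1 "[]"] by (cases h') auto
    qed auto
  next
    assume "[pkout] \<in> sem (E (cont p l)) [pkin]"
    then have "FTR (cont p l) pkin [pkout]" unfolding FTR_def by blast
    then show "[pkout] \<in> sem (cont p l) [pkin]" using FT by blast
  qed
  then show ?case using accN by simp
next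
  case (Cons pk1 w)
  let ?h = "pkout # rev w"
  have "?h @ [pk1] \<in> sem (cont p l) [pkin] \<longleftrightarrow>
     (\<exists>l' d k. (d,l',k) \<in> D (cont p l) \<and> [pk1] \<in> sem d [pkin] \<and> ?h \<in> sem k [pk1])"
  proof
    assume "?h @ [pk1] \<in> sem (cont p l) [pkin]"
    then have "FTR (cont p l) pkin (?h @ [pk1])" using FT by blast
    then show "\<exists>l' d k. (d,l',k) \<in> D (cont p l) \<and> [pk1] \<in> sem d [pkin] \<and> ?h \<in> sem k [pk1]"
      unfolding FTR_def
    proof (elim disjE exE conjE)
      fix pk' assume "?h @ [pk1] = [pk']" then show ?thesis by simp
    next
      fix d l' k pk1' h' assume "(d,l',k) \<in> D (cont p l)" "[pk1'] \<in> sem d [pkin]"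
        "h' \<in> sem k [pk1']" "?h @ [pk1] = h' @ [pk1']"
      moreover then have "h' = ?h" "pk1' = pk1" using append1_eq_conv by blast+
      ultimately show ?thesis by blast
    qed
  next
    assume "\<exists>l' d k. (d,l',k) \<in> D (cont p l) \<and> [pk1] \<in> sem d [pkin] \<and> ?h \<in> sem k [pk1]"
    then have "FTR (cont p l) pkin (?h @ [pk1])" unfolding FTR_def by blast
    then show "?h @ [pk1] \<in> sem (cont p l) [pkin]" using FT by blast
  qed
  also have "\<dots> \<longleftrightarrow> (\<exists>l' d k. (d,l',k) \<in> D (cont p l) \<and> [pk1] \<in> sem d [pkin] \<and>
      accept (prog_automaton p) l' pk1 w pkout)"
  proof -
    have "?h \<in> sem k [pk1] \<longleftrightarrow> accept (prog_automaton p) l' pk1 w pkout"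
      if "(d,l',k) \<in> D (cont p l)" for d l' k
    proof -
      from closure[OF dist pos Cons.prems that] have "l' \<in> set (labels p)" "k = cont p l'" by auto
      then show ?thesis using Cons.IH[of l' pk1] by simp
    qed
    then show ?thesis by blast
  qed
  finally have calc: "?h @ [pk1] \<in> sem (cont p l) [pkin] \<longleftrightarrow> (\<exists>l' d k. (d,l',k) \<in> D (cont p l) \<and> [pk1] \<in> sem d [pkin] \<and>
      accept (prog_automaton p) l' pk1 w pkout)" .
  have "pkout # rev (pk1#w) = ?h @ [pk1]" by simp
  then show ?case by (simp only: calc accC)
qed

theorem theorem2:
  fixes p :: "('f::finite) prog"
    and pkin pkout :: "'f pk"
    and pks :: "'f pk list"
  assumes "distinct (labels p)"
    and "\<forall>l\<in>set (labels p). 0 < l"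
  shows "(pkout # rev pks \<in> sem p [pkin]) \<longleftrightarrow>
         accept (prog_automaton p) (fst (snd (prog_automaton p))) pkin pks pkout"
proof -
  have "fst (snd (prog_automaton p)) = 0" unfolding prog_automaton_def by simp
  moreover have "cont p 0 = p" unfolding cont_def by simp
  ultimately show ?thesis using main[OF assms, of 0 pkin pks pkout] by simp
qed


end
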